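(* Let $(V_i)_{i\in I}$ be a set of $n$-parameter persistence modules such that $\prod_{i\in I}V_i$ is q-tame. Then the canonical map $\varphi:\bigoplus_{i\in I}V_i\to\prod_{i\in I}V_i$ is a weak equivalence, i.e. $\ker\varphi$ and $\operatorname{cok}\varphi$ are ephemeral.
   Context: Fix a field $\mathbb{k}$. An $n$-parameter persistence module is a functor $V:\mathbf{R}^n\to\mathbf{Vect}_{\mathbb{k}}$ ($\mathbf{R}^n$ with componentwise order), structure maps $V_{s,t}$. Write $s\ll t$ if $s_i<t_i$ for all $i$. $V$ is q-tame if $V_{s,t}$ has finite rank whenever $s\ll t$, and ephemeral if $V_{s,t}=0$ whenever $s\ll t$. Direct sums and products are computed pointwise. *)

theory Defs
  imports "HOL-Analysis.Finite_Cartesian_Product" "HOL-Algebra.Module" "HOL-Algebra.FiniteProduct"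
begin

text \<open>Parameter space: R^n, modelled as real^'n for a finite index type 'n,
  with the componentwise order (the library's less_eq on vec).
  The field k is a HOL-Algebra ring R with field R; vector spaces are
  HOL-Algebra modules over R.\<close>

definition ll :: "real^'n \<Rightarrow> real^'n \<Rightarrow> bool" where
  "ll s t \<longleftrightarrow> (\<forall>i. s $ i < t $ i)"

definition linmap :: "('k,'r) ring_scheme \<Rightarrow> ('k,'v,'a) module_scheme \<Rightarrow> ('k,'w,'b) module_scheme
    \<Rightarrow> ('v \<Rightarrow> 'w) \<Rightarrow> bool" where
  "linmap R M N h \<longleftrightarrow>
     (\<forall>x\<in>carrier M. h x \<in> carrier N) \<and>
     (\<forall>x\<in>carrier M. \<forall>y\<in>carrier M. h (x \<oplus>\<^bsub>M\<^esub> y) = h x \<oplus>\<^bsub>N\<^esub> h y) \<and>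
     (\<forall>a\<in>carrier R. \<forall>x\<in>carrier M. h (a \<odot>\<^bsub>M\<^esub> x) = a \<odot>\<^bsub>N\<^esub> h x)"

definition pmod :: "('k,'r) ring_scheme \<Rightarrow> (real^'n \<Rightarrow> ('k,'v) module)
    \<Rightarrow> (real^'n \<Rightarrow> real^'n \<Rightarrow> 'v \<Rightarrow> 'v) \<Rightarrow> bool" where
  "pmod R M f \<longleftrightarrow>
     (\<forall>s. module R (M s)) \<and>
     (\<forall>s t. s \<le> t \<longrightarrow> linmap R (M s) (M t) (f s t)) \<and>
     (\<forall>s. \<forall>x\<in>carrier (M s). f s s x = x) \<and>
     (\<forall>s t u. s \<le> t \<longrightarrow> t \<le> u \<longrightarrow> (\<forall>x\<in>carrier (M s). f s u x = f t u (f s t x)))"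

definition lspan :: "('k,'r) ring_scheme \<Rightarrow> ('k,'w) module \<Rightarrow> 'w set \<Rightarrow> 'w set" where
  "lspan R N B = {finsum N (\<lambda>b. c b \<odot>\<^bsub>N\<^esub> b) B | c. c \<in> B \<rightarrow> carrier R}"

definition finite_rank :: "('k,'r) ring_scheme \<Rightarrow> ('k,'v) module \<Rightarrow> ('k,'w) module
    \<Rightarrow> ('v \<Rightarrow> 'w) \<Rightarrow> bool" where
  "finite_rank R M N h \<longleftrightarrow>
     (\<exists>B. finite B \<and> B \<subseteq> h ` carrier M \<and> h ` carrier M \<subseteq> lspan R N B)"

definition q_tame :: "('k,'r) ring_scheme \<Rightarrow> (real^'n \<Rightarrow> ('k,'v) module)
    \<Rightarrow> (real^'n \<Rightarrow> real^'n \<Rightarrow> 'v \<Rightarrow> 'v) \<Rightarrow> bool" where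
  "q_tame R M f \<longleftrightarrow> (\<forall>s t. ll s t \<longrightarrow> finite_rank R (M s) (M t) (f s t))"

definition ephemeral :: "(real^'n \<Rightarrow> ('k,'v) module)
    \<Rightarrow> (real^'n \<Rightarrow> real^'n \<Rightarrow> 'v \<Rightarrow> 'v) \<Rightarrow> bool" where
  "ephemeral M f \<longleftrightarrow> (\<forall>s t. ll s t \<longrightarrow> (\<forall>x\<in>carrier (M s). f s t x = \<zero>\<^bsub>M t\<^esub>))"

definition ker_mod :: "(real^'n \<Rightarrow> ('k,'v) module) \<Rightarrow> (real^'n \<Rightarrow> ('k,'w) module)
    \<Rightarrow> (real^'n \<Rightarrow> 'v \<Rightarrow> 'w) \<Rightarrow> real^'n \<Rightarrow> ('k,'v) module" where
  "ker_mod M N phi s =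
     \<lparr>carrier = {x \<in> carrier (M s). phi s x = \<zero>\<^bsub>N s\<^esub>},
      mult = mult (M s), one = one (M s), zero = zero (M s), add = add (M s),
      smult = smult (M s)\<rparr>"

definition ker_map :: "(real^'n \<Rightarrow> real^'n \<Rightarrow> 'v \<Rightarrow> 'v) \<Rightarrow> real^'n \<Rightarrow> real^'n \<Rightarrow> 'v \<Rightarrow> 'v" where
  "ker_map f = f"

text \<open>Cokernel of phi: at s, the quotient N s / phi s (M s), realised by cosets.\<close>
definition im_sp :: "(real^'n \<Rightarrow> ('k,'v) module) \<Rightarrow> (real^'n \<Rightarrow> 'v \<Rightarrow> 'w) \<Rightarrow> real^'n \<Rightarrow> 'w set" where
  "im_sp M phi s = phi s ` carrier (M s)"

definition coset_of :: "('k,'w) module \<Rightarrow> 'w set \<Rightarrow> 'w \<Rightarrow> 'w set" where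
  "coset_of N H y = {y \<oplus>\<^bsub>N\<^esub> h | h. h \<in> H}"

definition cok_mod :: "(real^'n \<Rightarrow> ('k,'v) module) \<Rightarrow> (real^'n \<Rightarrow> ('k,'w) module)
    \<Rightarrow> (real^'n \<Rightarrow> 'v \<Rightarrow> 'w) \<Rightarrow> real^'n \<Rightarrow> ('k,'w set) module" where
  "cok_mod M N phi s =
     \<lparr>carrier = coset_of (N s) (im_sp M phi s) ` carrier (N s),
      mult = undefined, one = undefined,
      zero = im_sp M phi s,
      add = (\<lambda>A B. {a \<oplus>\<^bsub>N s\<^esub> b | a b. a \<in> A \<and> b \<in> B}),
      smult = (\<lambda>c A. {c \<odot>\<^bsub>N s\<^esub> a \<oplus>\<^bsub>N s\<^esub> h | a h. a \<in> A \<and> h \<in> im_sp M phi s})\<rparr>"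

definition cok_map :: "(real^'n \<Rightarrow> ('k,'v) module) \<Rightarrow> (real^'n \<Rightarrow> ('k,'w) module)
    \<Rightarrow> (real^'n \<Rightarrow> 'v \<Rightarrow> 'w) \<Rightarrow> (real^'n \<Rightarrow> real^'n \<Rightarrow> 'w \<Rightarrow> 'w)
    \<Rightarrow> real^'n \<Rightarrow> real^'n \<Rightarrow> 'w set \<Rightarrow> 'w set" where
  "cok_map M N phi g s t A = {g s t a \<oplus>\<^bsub>N t\<^esub> h | a h. a \<in> A \<and> h \<in> im_sp M phi t}"

definition weak_equiv :: "(real^'n \<Rightarrow> ('k,'v) module) \<Rightarrow> (real^'n \<Rightarrow> real^'n \<Rightarrow> 'v \<Rightarrow> 'v)
    \<Rightarrow> (real^'n \<Rightarrow> ('k,'w) module) \<Rightarrow> (real^'n \<Rightarrow> real^'n \<Rightarrow> 'w \<Rightarrow> 'w)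
    \<Rightarrow> (real^'n \<Rightarrow> 'v \<Rightarrow> 'w) \<Rightarrow> bool" where
  "weak_equiv M f N g phi \<longleftrightarrow>
     ephemeral (ker_mod M N phi) (ker_map f) \<and> ephemeral (cok_mod M N phi) (cok_map M N phi g)"

definition prod_mod :: "'i set \<Rightarrow> ('i \<Rightarrow> real^'n \<Rightarrow> ('k,'v) module) \<Rightarrow> real^'n
    \<Rightarrow> ('k,'i \<Rightarrow> 'v) module" where
  "prod_mod I M s =
     \<lparr>carrier = (\<Pi>\<^sub>E i\<in>I. carrier (M i s)),
      mult = undefined, one = undefined,
      zero = (\<lambda>i\<in>I. \<zero>\<^bsub>M i s\<^esub>),
      add = (\<lambda>x y. \<lambda>i\<in>I. x i \<oplus>\<^bsub>M i s\<^esub> y i),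
      smult = (\<lambda>a x. \<lambda>i\<in>I. a \<odot>\<^bsub>M i s\<^esub> x i)\<rparr>"

definition sum_mod :: "'i set \<Rightarrow> ('i \<Rightarrow> real^'n \<Rightarrow> ('k,'v) module) \<Rightarrow> real^'n
    \<Rightarrow> ('k,'i \<Rightarrow> 'v) module" where
  "sum_mod I M s =
     \<lparr>carrier = {x \<in> (\<Pi>\<^sub>E i\<in>I. carrier (M i s)). finite {i \<in> I. x i \<noteq> \<zero>\<^bsub>M i s\<^esub>}},
      mult = undefined, one = undefined,
      zero = (\<lambda>i\<in>I. \<zero>\<^bsub>M i s\<^esub>),
      add = (\<lambda>x y. \<lambda>i\<in>I. x i \<oplus>\<^bsub>M i s\<^esub> y i),
      smult = (\<lambda>a x. \<lambda>i\<in>I. a \<odot>\<^bsub>M i s\<^esub> x i)\<rparr>"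

definition fam_map :: "'i set \<Rightarrow> ('i \<Rightarrow> real^'n \<Rightarrow> real^'n \<Rightarrow> 'v \<Rightarrow> 'v)
    \<Rightarrow> real^'n \<Rightarrow> real^'n \<Rightarrow> ('i \<Rightarrow> 'v) \<Rightarrow> ('i \<Rightarrow> 'v)" where
  "fam_map I f s t x = (\<lambda>i\<in>I. f i s t (x i))"

definition canon :: "real^'n \<Rightarrow> ('i \<Rightarrow> 'v) \<Rightarrow> ('i \<Rightarrow> 'v)" where
  "canon s x = x"

end

theory Submission imports Defs "Jordan_Normal_Form.Missing_VectorSpace"
begin

lemma prod_mod_module:
  assumes mods: "\<forall>i\<in>I. module R (M i s)" and cr: "cring R"
  shows "module R (prod_mod I M s)"
proof (rule moduleI[OF cr])
  show "abelian_group (prod_mod I M s)"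
  proof (rule abelian_groupI)
    fix x y assume "x \<in> carrier (prod_mod I M s)" "y \<in> carrier (prod_mod I M s)"
    then show "x \<oplus>\<^bsub>prod_mod I M s\<^esub> y \<in> carrier (prod_mod I M s)"
      using mods by (auto simp: prod_mod_def PiE_iff intro: abelian_monoid.a_closed module.axioms(2) abelian_group.axioms)
  next
    show "\<zero>\<^bsub>prod_mod I M s\<^esub> \<in> carrier (prod_mod I M s)"
      using mods by (auto simp: prod_mod_def PiE_iff module_def abelian_group_def abelian_monoid.zero_closed)
  next
    fix x y z assume "x \<in> carrier (prod_mod I M s)" "y \<in> carrier (prod_mod I M s)" "z \<in> carrier (prod_mod I M s)"
    then show "x \<oplus>\<^bsub>prod_mod I M s\<^esub> y \<oplus>\<^bsub>prod_mod I M s\<^esub> z = x \<oplus>\<^bsub>prod_mod I M s\<^esub> (y \<oplus>\<^bsub>prod_mod I M s\<^esub> z)"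
      using mods by (auto simp: prod_mod_def PiE_iff module_def abelian_group_def abelian_monoid.a_assoc)
  next
    fix x y assume "x \<in> carrier (prod_mod I M s)" "y \<in> carrier (prod_mod I M s)"
    then show "x \<oplus>\<^bsub>prod_mod I M s\<^esub> y = y \<oplus>\<^bsub>prod_mod I M s\<^esub> x"
      using mods by (auto simp: prod_mod_def PiE_iff module_def abelian_group_def abelian_monoid.a_comm)
  next
    fix x assume "x \<in> carrier (prod_mod I M s)"
    then show "\<zero>\<^bsub>prod_mod I M s\<^esub> \<oplus>\<^bsub>prod_mod I M s\<^esub> x = x"
      using mods by (auto simp: prod_mod_def PiE_iff module_def abelian_group_def abelian_monoid.l_zero extensional_def)
  next
    fix x assume x: "x \<in> carrier (prod_mod I M s)"
    show "\<exists>y\<in>carrier (prod_mod I M s). y \<oplus>\<^bsub>prod_mod I M s\<^esub> x = \<zero>\<^bsub>prod_mod I M s\<^esub>"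
    proof (intro bexI)
      show "(\<lambda>i\<in>I. \<ominus>\<^bsub>M i s\<^esub> x i) \<in> carrier (prod_mod I M s)"
        using x mods by (auto simp: prod_mod_def PiE_iff module_def abelian_group.a_inv_closed)
      show "(\<lambda>i\<in>I. \<ominus>\<^bsub>M i s\<^esub> x i) \<oplus>\<^bsub>prod_mod I M s\<^esub> x = \<zero>\<^bsub>prod_mod I M s\<^esub>"
        using x mods by (auto simp: prod_mod_def PiE_iff module_def abelian_group.l_neg)
    qed
  qed
next
  fix a x assume "a \<in> carrier R" "x \<in> carrier (prod_mod I M s)"
  then show "a \<odot>\<^bsub>prod_mod I M s\<^esub> x \<in> carrier (prod_mod I M s)"
    using mods by (auto simp: prod_mod_def PiE_iff module.smult_closed)
next
  fix a b x assume "a \<in> carrier R" "b \<in> carrier R" "x \<in> carrier (prod_mod I M s)"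
  then show "(a \<oplus>\<^bsub>R\<^esub> b) \<odot>\<^bsub>prod_mod I M s\<^esub> x = a \<odot>\<^bsub>prod_mod I M s\<^esub> x \<oplus>\<^bsub>prod_mod I M s\<^esub> b \<odot>\<^bsub>prod_mod I M s\<^esub> x"
    using mods by (auto simp: prod_mod_def PiE_iff module.smult_l_distr)
next
  fix a x y assume "a \<in> carrier R" "x \<in> carrier (prod_mod I M s)" "y \<in> carrier (prod_mod I M s)"
  then show "a \<odot>\<^bsub>prod_mod I M s\<^esub> (x \<oplus>\<^bsub>prod_mod I M s\<^esub> y) = a \<odot>\<^bsub>prod_mod I M s\<^esub> x \<oplus>\<^bsub>prod_mod I M s\<^esub> a \<odot>\<^bsub>prod_mod I M s\<^esub> y"
    using mods by (auto simp: prod_mod_def PiE_iff intro!: restrict_ext module.smult_r_distr)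
next
  fix a b x assume "a \<in> carrier R" "b \<in> carrier R" "x \<in> carrier (prod_mod I M s)"
  then show "(a \<otimes>\<^bsub>R\<^esub> b) \<odot>\<^bsub>prod_mod I M s\<^esub> x = a \<odot>\<^bsub>prod_mod I M s\<^esub> (b \<odot>\<^bsub>prod_mod I M s\<^esub> x)"
    using mods by (auto simp: prod_mod_def PiE_iff module.smult_assoc1)
next
  fix x assume "x \<in> carrier (prod_mod I M s)"
  then show "\<one>\<^bsub>R\<^esub> \<odot>\<^bsub>prod_mod I M s\<^esub> x = x"
    using mods by (auto simp: prod_mod_def PiE_iff module.smult_one extensional_def)
qed

lemma linmap_zero:
  assumes "module R M" "module R N" "linmap R M N h"
  shows "h \<zero>\<^bsub>M\<^esub> = \<zero>\<^bsub>N\<^esub>"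
proof -
  interpret M: module R M by fact
  interpret N: module R N by fact
  have c: "h \<zero>\<^bsub>M\<^esub> \<in> carrier N" using assms(3) M.zero_closed unfolding linmap_def by blast
  have e1: "h (\<zero>\<^bsub>M\<^esub> \<oplus>\<^bsub>M\<^esub> \<zero>\<^bsub>M\<^esub>) = h \<zero>\<^bsub>M\<^esub> \<oplus>\<^bsub>N\<^esub> h \<zero>\<^bsub>M\<^esub>"
    using assms(3) M.zero_closed unfolding linmap_def by blast
  have "h \<zero>\<^bsub>M\<^esub> \<oplus>\<^bsub>N\<^esub> h \<zero>\<^bsub>M\<^esub> = h \<zero>\<^bsub>M\<^esub>" using e1 by simp
  then show ?thesis using c N.add.l_cancel_one[OF c c] by simp
qed

lemma prod_finsum_coord:
  assumes mods: "\<forall>i\<in>I. module R (M i s)" and cr: "cring R" and fin: "finite A"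
    and g: "g \<in> A \<rightarrow> carrier (prod_mod I M s)" and i: "i \<in> I"
  shows "finsum (prod_mod I M s) g A i = finsum (M i s) (\<lambda>a. g a i) A"
  using fin g
proof (induction A rule: finite_induct)
  case empty
  interpret P: module R "prod_mod I M s" by (rule prod_mod_module[of I R M s, OF mods cr])
  interpret Mi: module R "M i s" using mods i by blast
  have "finsum (prod_mod I M s) g {} = \<zero>\<^bsub>prod_mod I M s\<^esub>" by (rule P.finsum_empty)
  then show ?case using i by (simp add: prod_mod_def)
next
  case (insert a F)
  interpret P: module R "prod_mod I M s" by (rule prod_mod_module[of I R M s, OF mods cr])
  interpret Mi: module R "M i s" using mods i by blast
  have gi: "(\<lambda>a. g a i) \<in> insert a F \<rightarrow> carrier (M i s)"
    using insert.prems i by (auto simp: prod_mod_def PiE_iff)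
  have "finsum (prod_mod I M s) g (insert a F) = g a \<oplus>\<^bsub>prod_mod I M s\<^esub> finsum (prod_mod I M s) g F"
    using insert by (intro P.finsum_insert) auto
  then have "finsum (prod_mod I M s) g (insert a F) i = g a i \<oplus>\<^bsub>M i s\<^esub> finsum (prod_mod I M s) g F i"
    using i by (simp add: prod_mod_def)
  also have "\<dots> = g a i \<oplus>\<^bsub>M i s\<^esub> finsum (M i s) (\<lambda>a. g a i) F"
    using insert by simp
  also have "\<dots> = finsum (M i s) (\<lambda>a. g a i) (insert a F)"
    using insert gi by (intro Mi.finsum_insert[symmetric]) auto
  finally show ?case .
qed

lemma field_cring: "field R \<Longrightarrow> cring R"
  by (simp add: field_def domain_def)

lemma key_finite:
  assumes fR: "field R" and pm: "\<forall>i\<in>I. pmod R (M i) (f i)" and st: "s \<le> t"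
    and fr: "finite_rank R (prod_mod I M s) (prod_mod I M t) (fam_map I f s t)"
  shows "finite {i\<in>I. \<exists>x\<in>carrier (M i s). f i s t x \<noteq> \<zero>\<^bsub>M i t\<^esub>}"
proof (rule ccontr)
  define J where "J = {i\<in>I. \<exists>x\<in>carrier (M i s). f i s t x \<noteq> \<zero>\<^bsub>M i t\<^esub>}"
  assume "\<not> finite {i\<in>I. \<exists>x\<in>carrier (M i s). f i s t x \<noteq> \<zero>\<^bsub>M i t\<^esub>}"
  then have infJ: "infinite J" by (simp add: J_def)
  have cr: "cring R" using fR by (rule field_cring)
  have modI: "\<forall>i\<in>I. \<forall>u. module R (M i u)" using pm by (simp add: pmod_def)
  have lin: "\<forall>i\<in>I. linmap R (M i s) (M i t) (f i s t)" using pm st by (simp add: pmod_def)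
  have Ptm: "module R (prod_mod I M t)" using prod_mod_module[of I R M t] modI cr by blast
  interpret Pt: module R "prod_mod I M t" by (rule Ptm)
  interpret Vt: vectorspace R "prod_mod I M t" using Ptm fR by (simp add: vectorspace_def)
  obtain B where B: "finite B" "B \<subseteq> fam_map I f s t ` carrier (prod_mod I M s)"
    "fam_map I f s t ` carrier (prod_mod I M s) \<subseteq> lspan R (prod_mod I M t) B"
    using fr by (auto simp: finite_rank_def)
  have img_c: "fam_map I f s t x \<in> carrier (prod_mod I M t)" if "x \<in> carrier (prod_mod I M s)" for x
    using lin that by (auto simp: fam_map_def prod_mod_def linmap_def PiE_iff)
  have Bc: "B \<subseteq> carrier (prod_mod I M t)" using B(2) img_c by blast
  have lspan_eq: "lspan R (prod_mod I M t) B = Pt.span B"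
    using Pt.finite_span[OF B(1) Bc] by (auto simp: lspan_def Pt.lincomb_def)
  have "\<forall>i\<in>J. \<exists>x. x \<in> carrier (M i s) \<and> f i s t x \<noteq> \<zero>\<^bsub>M i t\<^esub>" by (auto simp: J_def)
  from bchoice[OF this] obtain y where y: "\<forall>i\<in>J. y i \<in> carrier (M i s) \<and> f i s t (y i) \<noteq> \<zero>\<^bsub>M i t\<^esub>"
    by blast
  have JI: "J \<subseteq> I" by (auto simp: J_def)
  define D where "D i = (\<lambda>j\<in>I. if j = i then y i else \<zero>\<^bsub>M j s\<^esub>)" for i
  define E where "E i = fam_map I f s t (D i)" for i
  have Dc: "D i \<in> carrier (prod_mod I M s)" if "i \<in> J" for i
  proof -
    have z: "\<zero>\<^bsub>M j s\<^esub> \<in> carrier (M j s)" if "j \<in> I" for j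
      using modI that abelian_monoid.zero_closed[OF abelian_group.axioms(1)[OF module.axioms(2)]] by blast
    have "y i \<in> carrier (M i s)" using y that by blast
    then show ?thesis unfolding D_def prod_mod_def using z by (simp add: PiE_iff)
  qed
  have Eii: "E i i = f i s t (y i)" if "i \<in> J" for i
  proof -
    have "i \<in> I" using that JI by blast
    then show ?thesis by (simp add: E_def D_def fam_map_def)
  qed
  have Eij: "E i j = \<zero>\<^bsub>M j t\<^esub>" if "i \<in> J" "j \<in> I" "j \<noteq> i" for i j
  proof -
    have "E i j = f j s t \<zero>\<^bsub>M j s\<^esub>" using that by (auto simp: E_def D_def fam_map_def)
    also have "\<dots> = \<zero>\<^bsub>M j t\<^esub>" using modI lin that by (intro linmap_zero) auto
    finally show ?thesis .
  qed
  obtain J0 where J0: "J0 \<subseteq> J" "finite J0" "card J0 = Suc (card B)"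
    using infinite_arbitrarily_large[OF infJ] by blast
  define A where "A = E ` J0"
  have injE: "inj_on E J0"
  proof (rule inj_onI)
    fix i k assume ik: "i \<in> J0" "k \<in> J0" "E i = E k"
    show "i = k"
    proof (rule ccontr)
      assume "i \<noteq> k"
      then have "E k i = \<zero>\<^bsub>M i t\<^esub>" using ik J0 JI by (intro Eij) auto
      moreover have "E i i \<noteq> \<zero>\<^bsub>M i t\<^esub>"
      proof -
        have iJ: "i \<in> J" using ik J0 by blast
        then show ?thesis using Eii[OF iJ] y by simp
      qed
      ultimately show False using ik by simp
    qed
  qed
  have finA: "finite A" using J0 by (simp add: A_def)
  have cardA: "card A = Suc (card B)" using injE J0 by (simp add: A_def card_image)
  have Ac: "A \<subseteq> carrier (prod_mod I M t)" using J0 Dc img_c by (auto simp: A_def E_def)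
  have "A \<subseteq> fam_map I f s t ` carrier (prod_mod I M s)" using J0 Dc unfolding A_def E_def by blast
  then have A_span: "A \<subseteq> Pt.span B" using B(3) unfolding lspan_eq by (rule subset_trans)
  have li: "\<not> Pt.lin_dep A"
  proof
    assume "Pt.lin_dep A"
    from Pt.finite_lin_dep[OF finA this Ac] obtain a v where
      a: "a \<in> A \<rightarrow> carrier R" "Pt.lincomb a A = \<zero>\<^bsub>prod_mod I M t\<^esub>" "v \<in> A" "a v \<noteq> \<zero>\<^bsub>R\<^esub>"
      by blast
    then obtain k where k: "k \<in> J0" "v = E k" by (auto simp: A_def)
    have kI: "k \<in> I" using k J0 JI by auto
    have Mkm: "module R (M k t)" using modI kI by blast
    interpret Mk: vectorspace R "M k t" using Mkm fR by (simp add: vectorspace_def)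
    have yk: "y k \<in> carrier (M k s)" "f i s t (y k) \<noteq> \<zero>\<^bsub>M k t\<^esub>" if "i = k" for i
      using y k J0 that by auto
    have fyk: "f k s t (y k) \<in> carrier (M k t)" using lin kI yk unfolding linmap_def by blast
    have av: "a v \<in> carrier R" using a by blast
    have sm_c: "(\<lambda>w. a w \<odot>\<^bsub>prod_mod I M t\<^esub> w) \<in> A \<rightarrow> carrier (prod_mod I M t)"
      using a(1) Ac by auto
    have "Pt.lincomb a A k = finsum (M k t) (\<lambda>w. (a w \<odot>\<^bsub>prod_mod I M t\<^esub> w) k) A"
      unfolding Pt.lincomb_def using prod_finsum_coord[of I R M t A _ k] modI cr finA sm_c kI by blast
    also have "\<dots> = finsum (M k t) (\<lambda>w. if v = w then a v \<odot>\<^bsub>M k t\<^esub> f k s t (y k) else \<zero>\<^bsub>M k t\<^esub>) A"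
    proof (rule Mk.finsum_cong')
      show "A = A" ..
      show "(\<lambda>w. if v = w then a v \<odot>\<^bsub>M k t\<^esub> f k s t (y k) else \<zero>\<^bsub>M k t\<^esub>) \<in> A \<rightarrow> carrier (M k t)"
        using av fyk by auto
      fix w assume w: "w \<in> A"
      then obtain j where j: "j \<in> J0" "w = E j" by (auto simp: A_def)
      have "(a w \<odot>\<^bsub>prod_mod I M t\<^esub> w) k = a w \<odot>\<^bsub>M k t\<^esub> w k" using kI by (simp add: prod_mod_def)
      moreover have "a w \<in> carrier R" using a w by blast
      ultimately show "(a w \<odot>\<^bsub>prod_mod I M t\<^esub> w) k = (if v = w then a v \<odot>\<^bsub>M k t\<^esub> f k s t (y k) else \<zero>\<^bsub>M k t\<^esub>)"
      proof (cases "j = k")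
        case True
        then have "v = w" "w k = f k s t (y k)" using j k Eii J0 by auto
        then show ?thesis using \<open>(a w \<odot>\<^bsub>prod_mod I M t\<^esub> w) k = a w \<odot>\<^bsub>M k t\<^esub> w k\<close> by simp
      next
        case False
        have "E j \<noteq> E k" using False j(1) k(1) injE by (meson inj_onD)
        then have "v \<noteq> w" using j k by simp
        moreover have "w k = \<zero>\<^bsub>M k t\<^esub>" using j J0 kI False Eij[of j k] by auto
        ultimately show ?thesis using \<open>(a w \<odot>\<^bsub>prod_mod I M t\<^esub> w) k = a w \<odot>\<^bsub>M k t\<^esub> w k\<close> \<open>a w \<in> carrier R\<close>
          by simp
      qed
    qed
    also have "\<dots> = a v \<odot>\<^bsub>M k t\<^esub> f k s t (y k)"
      using Mk.finsum_singleton[of v A "\<lambda>_. a v \<odot>\<^bsub>M k t\<^esub> f k s t (y k)"] a(3) finA av fyk by auto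
    finally have "a v \<odot>\<^bsub>M k t\<^esub> f k s t (y k) = \<zero>\<^bsub>M k t\<^esub>"
      using a(2) kI by (simp add: prod_mod_def)
    then have "f k s t (y k) = inv\<^bsub>R\<^esub> (a v) \<odot>\<^bsub>M k t\<^esub> \<zero>\<^bsub>M k t\<^esub>"
      using Mk.mult_inverse[OF av fyk _ a(4)] by blast
    moreover have "inv\<^bsub>R\<^esub> (a v) \<in> carrier R"
    proof -
      have "a v \<in> Units R" using av a(4) field.field_Units[OF fR] by blast
      then show ?thesis by (rule Pt.Units_inv_closed)
    qed
    ultimately have "f k s t (y k) = \<zero>\<^bsub>M k t\<^esub>" by simp
    then show False using yk by auto
  qed
  from Vt.replacement[OF finA B(1) Bc li A_span] cardA show False by auto
qed

lemma ll_le: "ll s t \<Longrightarrow> s \<le> t"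
  by (auto simp: ll_def less_eq_vec_def less_imp_le)

lemma mod_facts:
  assumes "module R N" "a \<in> carrier N" "b \<in> carrier N"
  shows "a \<oplus>\<^bsub>N\<^esub> (\<ominus>\<^bsub>N\<^esub> a \<oplus>\<^bsub>N\<^esub> b) = b" "\<ominus>\<^bsub>N\<^esub> a \<oplus>\<^bsub>N\<^esub> b \<in> carrier N"
    "a \<oplus>\<^bsub>N\<^esub> b \<in> carrier N"
proof -
  interpret N: module R N by fact
  show "a \<oplus>\<^bsub>N\<^esub> (\<ominus>\<^bsub>N\<^esub> a \<oplus>\<^bsub>N\<^esub> b) = b"
    using assms(2,3) by (simp add: N.a_assoc[symmetric] N.r_neg)
  show "\<ominus>\<^bsub>N\<^esub> a \<oplus>\<^bsub>N\<^esub> b \<in> carrier N" using assms(2,3) by simp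
  show "a \<oplus>\<^bsub>N\<^esub> b \<in> carrier N" using assms(2,3) by simp
qed

lemma mod_zero_facts:
  assumes "module R N"
  shows "\<ominus>\<^bsub>N\<^esub> \<zero>\<^bsub>N\<^esub> \<oplus>\<^bsub>N\<^esub> \<zero>\<^bsub>N\<^esub> = \<zero>\<^bsub>N\<^esub>"
    "\<zero>\<^bsub>N\<^esub> \<oplus>\<^bsub>N\<^esub> \<zero>\<^bsub>N\<^esub> = \<zero>\<^bsub>N\<^esub>" "\<zero>\<^bsub>N\<^esub> \<in> carrier N"
proof -
  interpret N: module R N by fact
  show "\<ominus>\<^bsub>N\<^esub> \<zero>\<^bsub>N\<^esub> \<oplus>\<^bsub>N\<^esub> \<zero>\<^bsub>N\<^esub> = \<zero>\<^bsub>N\<^esub>" by simp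
  show "\<zero>\<^bsub>N\<^esub> \<oplus>\<^bsub>N\<^esub> \<zero>\<^bsub>N\<^esub> = \<zero>\<^bsub>N\<^esub>" by simp
  show "\<zero>\<^bsub>N\<^esub> \<in> carrier N" by simp
qed

theorem lemma3p9:
  fixes R :: "('k, 'r) ring_scheme"
    and I :: "'i set"
    and M :: "'i \<Rightarrow> real^'n \<Rightarrow> ('k, 'v) module"
    and f :: "'i \<Rightarrow> real^'n \<Rightarrow> real^'n \<Rightarrow> 'v \<Rightarrow> 'v"
  assumes "field R"
    and "\<forall>i\<in>I. pmod R (M i) (f i)"
    and "q_tame R (prod_mod I M) (fam_map I f)"
  shows "weak_equiv (sum_mod I M) (fam_map I f) (prod_mod I M) (fam_map I f) canon"
proof -
  have cr: "cring R" using assms(1) by (rule field_cring)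
  have modI: "\<forall>i\<in>I. \<forall>u. module R (M i u)" using assms(2) by (simp add: pmod_def)
  have lin: "\<And>s t. s \<le> t \<Longrightarrow> \<forall>i\<in>I. linmap R (M i s) (M i t) (f i s t)"
    using assms(2) by (simp add: pmod_def)
  have f0: "f i s t \<zero>\<^bsub>M i s\<^esub> = \<zero>\<^bsub>M i t\<^esub>" if "i \<in> I" "s \<le> t" for i s t
    using linmap_zero[of R "M i s" "M i t" "f i s t"] modI lin[OF that(2)] that(1) by blast
  have z1: "\<ominus>\<^bsub>M i u\<^esub> \<zero>\<^bsub>M i u\<^esub> \<oplus>\<^bsub>M i u\<^esub> \<zero>\<^bsub>M i u\<^esub> = \<zero>\<^bsub>M i u\<^esub>" if "i \<in> I" for i u
    using mod_zero_facts(1) modI that by blast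
  have z2: "\<zero>\<^bsub>M i u\<^esub> \<oplus>\<^bsub>M i u\<^esub> \<zero>\<^bsub>M i u\<^esub> = \<zero>\<^bsub>M i u\<^esub>" if "i \<in> I" for i u
    using mod_zero_facts(2) modI that by blast
  have z3: "\<zero>\<^bsub>M i u\<^esub> \<in> carrier (M i u)" if "i \<in> I" for i u
    using mod_zero_facts(3) modI that by blast
  have c1: "a \<oplus>\<^bsub>M i u\<^esub> (\<ominus>\<^bsub>M i u\<^esub> a \<oplus>\<^bsub>M i u\<^esub> b) = b"
    if "i \<in> I" "a \<in> carrier (M i u)" "b \<in> carrier (M i u)" for i u a b
    using mod_facts(1)[of R "M i u" a b] modI that by blast
  have c2: "\<ominus>\<^bsub>M i u\<^esub> a \<oplus>\<^bsub>M i u\<^esub> b \<in> carrier (M i u)"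
    if "i \<in> I" "a \<in> carrier (M i u)" "b \<in> carrier (M i u)" for i u a b
    using mod_facts(2)[of R "M i u" a b] modI that by blast
  have c3: "a \<oplus>\<^bsub>M i u\<^esub> b \<in> carrier (M i u)"
    if "i \<in> I" "a \<in> carrier (M i u)" "b \<in> carrier (M i u)" for i u a b
    using mod_facts(3)[of R "M i u" a b] modI that by blast
  have K: "ephemeral (ker_mod (sum_mod I M) (prod_mod I M) canon) (ker_map (fam_map I f))"
    unfolding ephemeral_def
  proof (intro allI impI ballI)
    fix s t x assume st: "ll s t" and x: "x \<in> carrier (ker_mod (sum_mod I M) (prod_mod I M) canon s)"
    have x0: "x = (\<lambda>i\<in>I. \<zero>\<^bsub>M i s\<^esub>)" using x by (simp add: ker_mod_def canon_def prod_mod_def)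
    show "ker_map (fam_map I f) s t x = \<zero>\<^bsub>ker_mod (sum_mod I M) (prod_mod I M) canon t\<^esub>"
      using f0 ll_le[OF st] unfolding x0
      by (auto simp: ker_map_def ker_mod_def sum_mod_def fam_map_def intro!: restrict_ext)
  qed
  define S where "S u = carrier (sum_mod I M u)" for u
  have imS: "im_sp (sum_mod I M) canon u = S u" for u
    by (simp add: im_sp_def canon_def S_def)
  have S_sub: "S u \<subseteq> carrier (prod_mod I M u)" for u
    by (auto simp: S_def sum_mod_def prod_mod_def)
  have S_add: "a \<oplus>\<^bsub>prod_mod I M u\<^esub> b \<in> S u" if "a \<in> S u" "b \<in> S u" for a b u
  proof -
    have sub: "{i \<in> I. (a \<oplus>\<^bsub>prod_mod I M u\<^esub> b) i \<noteq> \<zero>\<^bsub>M i u\<^esub>}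
        \<subseteq> {i \<in> I. a i \<noteq> \<zero>\<^bsub>M i u\<^esub>} \<union> {i \<in> I. b i \<noteq> \<zero>\<^bsub>M i u\<^esub>}"
      using z2 by (auto simp: prod_mod_def)
    have "finite ({i \<in> I. a i \<noteq> \<zero>\<^bsub>M i u\<^esub>} \<union> {i \<in> I. b i \<noteq> \<zero>\<^bsub>M i u\<^esub>})"
      using that by (simp add: S_def sum_mod_def)
    then have "finite {i \<in> I. (a \<oplus>\<^bsub>prod_mod I M u\<^esub> b) i \<noteq> \<zero>\<^bsub>M i u\<^esub>}"
      using sub finite_subset by blast
    moreover have "a \<oplus>\<^bsub>prod_mod I M u\<^esub> b \<in> (\<Pi>\<^sub>E i\<in>I. carrier (M i u))"
      using that c3 by (auto simp: S_def sum_mod_def prod_mod_def PiE_iff)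
    ultimately show ?thesis by (simp add: S_def sum_mod_def)
  qed
  have C: "ephemeral (cok_mod (sum_mod I M) (prod_mod I M) canon)
      (cok_map (sum_mod I M) (prod_mod I M) canon (fam_map I f))"
    unfolding ephemeral_def
  proof (intro allI impI ballI)
    fix s t X assume st: "ll s t" and X: "X \<in> carrier (cok_mod (sum_mod I M) (prod_mod I M) canon s)"
    have le: "s \<le> t" using ll_le[OF st] .
    obtain y where y: "y \<in> carrier (prod_mod I M s)" and Xy: "X = coset_of (prod_mod I M s) (S s) y"
      using X by (auto simp: cok_mod_def imS)
    have fr: "finite_rank R (prod_mod I M s) (prod_mod I M t) (fam_map I f s t)"
      using assms(3) st by (simp add: q_tame_def)
    define Jst where "Jst = {i\<in>I. \<exists>x\<in>carrier (M i s). f i s t x \<noteq> \<zero>\<^bsub>M i t\<^esub>}"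
    have finJ: "finite Jst" unfolding Jst_def by (rule key_finite[OF assms(1,2) le fr])
    have FS: "fam_map I f s t x \<in> S t" if x: "x \<in> carrier (prod_mod I M s)" for x
    proof -
      have "fam_map I f s t x \<in> (\<Pi>\<^sub>E i\<in>I. carrier (M i t))"
        using lin[OF le] x by (auto simp: fam_map_def prod_mod_def linmap_def PiE_iff)
      moreover have "{i \<in> I. fam_map I f s t x i \<noteq> \<zero>\<^bsub>M i t\<^esub>} \<subseteq> Jst"
        using x by (auto simp: fam_map_def prod_mod_def Jst_def PiE_iff)
      then have "finite {i \<in> I. fam_map I f s t x i \<noteq> \<zero>\<^bsub>M i t\<^esub>}"
        using finJ finite_subset by blast
      ultimately show ?thesis by (simp add: S_def sum_mod_def)
    qed
    have Pm: "module R (prod_mod I M u)" for u using prod_mod_module[of I R M u] modI cr by blast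
    have "cok_map (sum_mod I M) (prod_mod I M) canon (fam_map I f) s t X = S t"
    proof
      show "cok_map (sum_mod I M) (prod_mod I M) canon (fam_map I f) s t X \<subseteq> S t"
      proof
        fix z assume "z \<in> cok_map (sum_mod I M) (prod_mod I M) canon (fam_map I f) s t X"
        then obtain a h where z: "z = fam_map I f s t a \<oplus>\<^bsub>prod_mod I M t\<^esub> h" and a: "a \<in> X" and h: "h \<in> S t"
          by (auto simp: cok_map_def imS)
        obtain h0 where h0: "h0 \<in> S s" "a = y \<oplus>\<^bsub>prod_mod I M s\<^esub> h0"
          using a by (auto simp: Xy coset_of_def)
        have "a \<in> carrier (prod_mod I M s)"
          using h0 y S_sub mod_facts(3)[OF Pm] by blast
        then show "z \<in> S t" using z h FS S_add by blast
      qed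
    next
      show "S t \<subseteq> cok_map (sum_mod I M) (prod_mod I M) canon (fam_map I f) s t X"
      proof
        fix z assume z: "z \<in> S t"
        define Fy where "Fy = fam_map I f s t y"
        have Fy: "Fy \<in> S t" using FS y by (simp add: Fy_def)
        define h where "h = (\<lambda>i\<in>I. \<ominus>\<^bsub>M i t\<^esub> Fy i \<oplus>\<^bsub>M i t\<^esub> z i)"
        have zc: "z \<in> (\<Pi>\<^sub>E i\<in>I. carrier (M i t))" using z by (simp add: S_def sum_mod_def)
        have Fyc: "Fy \<in> (\<Pi>\<^sub>E i\<in>I. carrier (M i t))" using Fy by (simp add: S_def sum_mod_def)
        have hS: "h \<in> S t"
        proof -
          have "h \<in> (\<Pi>\<^sub>E i\<in>I. carrier (M i t))"
            using zc Fyc c2 by (auto simp: h_def PiE_iff)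
          moreover have "{i \<in> I. h i \<noteq> \<zero>\<^bsub>M i t\<^esub>} \<subseteq> {i \<in> I. Fy i \<noteq> \<zero>\<^bsub>M i t\<^esub>} \<union> {i \<in> I. z i \<noteq> \<zero>\<^bsub>M i t\<^esub>}"
            using z1 by (auto simp: h_def)
          moreover have "finite ({i \<in> I. Fy i \<noteq> \<zero>\<^bsub>M i t\<^esub>} \<union> {i \<in> I. z i \<noteq> \<zero>\<^bsub>M i t\<^esub>})"
            using z Fy by (simp add: S_def sum_mod_def)
          ultimately show ?thesis using finite_subset by (simp add: S_def sum_mod_def) blast
        qed
        have zero_S: "\<zero>\<^bsub>prod_mod I M s\<^esub> \<in> S s"
          using z3 by (auto simp: S_def sum_mod_def prod_mod_def PiE_iff)
        have yy: "y = y \<oplus>\<^bsub>prod_mod I M s\<^esub> \<zero>\<^bsub>prod_mod I M s\<^esub>"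
          using y module.axioms(2)[OF Pm] abelian_monoid.r_zero[OF abelian_group.axioms(1)] by metis
        have yX: "y \<in> X" unfolding Xy coset_of_def using zero_S yy by blast
        have "Fy \<oplus>\<^bsub>prod_mod I M t\<^esub> h = z"
        proof -
          have "Fy \<oplus>\<^bsub>prod_mod I M t\<^esub> h = (\<lambda>i\<in>I. z i)"
            using zc Fyc c1 by (auto simp: h_def prod_mod_def PiE_iff intro!: restrict_ext)
          also have "\<dots> = z" using zc by (simp add: PiE_iff extensional_restrict)
          finally show ?thesis .
        qed
        then show "z \<in> cok_map (sum_mod I M) (prod_mod I M) canon (fam_map I f) s t X"
          unfolding cok_map_def imS using yX hS Fy_def by blast
      qed
    qed
    then show "cok_map (sum_mod I M) (prod_mod I M) canon (fam_map I f) s t X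
        = \<zero>\<^bsub>cok_mod (sum_mod I M) (prod_mod I M) canon t\<^esub>"
      by (simp add: cok_mod_def imS)
  qed
  show ?thesis using K C by (simp add: weak_equiv_def)
qed

end
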